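(* Let $X$ be a locally compact non-compact group. A filter $\xi$ on $X$ is coarse if and only if it is round and invariant.
   Context: A filter on $X$ is a nonempty family of subsets not containing $\emptyset$, stable under finite intersections and supersets. $\xi$ is round if for every $F\in\xi$ there are a neighborhood $V$ of the identity $e$ and $G\in\xi$ with $VG=\{xy:x\in V,y\in G\}\subset F$ (i.e. the sets $VG$ form a basis of $\xi$). $\xi$ is (left) invariant if $xF\in\xi$ for all $x\in X$ and $F\in\xi$. $\xi$ is coarse if for every $F\in\xi$ and every compact $K\subset X$ there is $G\in\xi$ with $KG\subset F$. *)

theory Defs
  imports "HOL-Analysis.Analysis"
begin

text \<open>Groups are written additively: the group is a type of class topological_group_add
  (group_add need not be commutative); the identity is 0 and the product xy is x + y.\<close>

definition set_prod :: "'a::plus set \<Rightarrow> 'a set \<Rightarrow> 'a set" where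
  "set_prod A B = {x + y | x y. x \<in> A \<and> y \<in> B}"

definition is_filter :: "'a set set \<Rightarrow> bool" where
  "is_filter \<xi> \<longleftrightarrow> \<xi> \<noteq> {} \<and> {} \<notin> \<xi>
     \<and> (\<forall>F\<in>\<xi>. \<forall>G\<in>\<xi>. F \<inter> G \<in> \<xi>)
     \<and> (\<forall>F\<in>\<xi>. \<forall>G. F \<subseteq> G \<longrightarrow> G \<in> \<xi>)"

definition nbhd_of_identity :: "'a::{topological_space,zero} set \<Rightarrow> bool" where
  "nbhd_of_identity V \<longleftrightarrow> (\<exists>U. open U \<and> 0 \<in> U \<and> U \<subseteq> V)"

definition round_filter :: "'a::{topological_space,monoid_add} set set \<Rightarrow> bool" where
  "round_filter \<xi> \<longleftrightarrow>
     (\<forall>F\<in>\<xi>. \<exists>V G. nbhd_of_identity V \<and> G \<in> \<xi> \<and> set_prod V G \<subseteq> F)"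

definition invariant_filter :: "'a::plus set set \<Rightarrow> bool" where
  "invariant_filter \<xi> \<longleftrightarrow> (\<forall>x. \<forall>F\<in>\<xi>. (\<lambda>y. x + y) ` F \<in> \<xi>)"

definition coarse_filter :: "'a::{topological_space,plus} set set \<Rightarrow> bool" where
  "coarse_filter \<xi> \<longleftrightarrow>
     (\<forall>F\<in>\<xi>. \<forall>K. compact K \<longrightarrow> (\<exists>G\<in>\<xi>. set_prod K G \<subseteq> F))"

end

theory Submission
  imports Defs
begin

lemma open_right_translate:
  fixes U :: "'a::topological_group_add set"
  assumes "open U"
  shows "open ((\<lambda>x. x + k) ` U)"
proof -
  have eq: "(\<lambda>x. x + k) ` U = (\<lambda>x. x + (-k)) -` U"
  proof
    show "(\<lambda>x. x + k) ` U \<subseteq> (\<lambda>x. x + (-k)) -` U" by (auto simp: add.assoc)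
    show "(\<lambda>x. x + (-k)) -` U \<subseteq> (\<lambda>x. x + k) ` U"
    proof
      fix x assume "x \<in> (\<lambda>x. x + (-k)) -` U"
      then have "x + (-k) \<in> U" by simp
      moreover have "x = (x + (-k)) + k" by (simp add: add.assoc)
      ultimately show "x \<in> (\<lambda>x. x + k) ` U" by blast
    qed
  qed
  have "continuous_on UNIV (\<lambda>x::'a. x + (-k))"
    by (intro continuous_intros)
  then have "open (UNIV \<inter> (\<lambda>x. x + (-k)) -` U)"
    using continuous_on_open_vimage[of UNIV "\<lambda>x::'a. x + (-k)"] assms by auto
  then show ?thesis using eq by simp
qed

lemma filter_inter_fin:
  assumes "is_filter \<xi>" "finite D" "G \<in> \<xi>" "\<And>k. k \<in> D \<Longrightarrow> H k \<in> \<xi>"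
  shows "G \<inter> \<Inter>(H ` D) \<in> \<xi>"
  using assms(2,4)
proof (induction D rule: finite_induct)
  case empty then show ?case using assms(3) by simp
next
  case (insert x F)
  have "G \<inter> \<Inter>(H ` insert x F) = H x \<inter> (G \<inter> \<Inter>(H ` F))" by auto
  then show ?case using insert assms(1) unfolding is_filter_def by auto
qed

theorem proposition6p6:
  fixes \<xi> :: "'a::topological_group_add set set"
  assumes "locally_compact_space (euclidean :: 'a topology)"
    and "\<not> compact (UNIV :: 'a set)"
    and "is_filter \<xi>"
  shows "coarse_filter \<xi> \<longleftrightarrow> round_filter \<xi> \<and> invariant_filter \<xi>"
proof
  assume C: "coarse_filter \<xi>"
  obtain U K0 where UK: "open U" "compact K0" "(0::'a) \<in> U" "U \<subseteq> K0"
    using assms(1) unfolding locally_compact_space_def by simp (metis)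
  have "round_filter \<xi>"
    unfolding round_filter_def
  proof
    fix F assume "F \<in> \<xi>"
    then obtain G where "G \<in> \<xi>" "set_prod K0 G \<subseteq> F" using C UK(2) unfolding coarse_filter_def by blast
    moreover have "nbhd_of_identity K0" using UK unfolding nbhd_of_identity_def by blast
    ultimately show "\<exists>V G. nbhd_of_identity V \<and> G \<in> \<xi> \<and> set_prod V G \<subseteq> F" by blast
  qed
  moreover have "invariant_filter \<xi>"
    unfolding invariant_filter_def
  proof (intro allI ballI)
    fix x F assume "F \<in> \<xi>"
    then obtain G where G: "G \<in> \<xi>" "set_prod {-x} G \<subseteq> F"
      using C unfolding coarse_filter_def by (meson compact_sing)
    have "G \<subseteq> (\<lambda>y. x + y) ` F"
    proof
      fix g assume "g \<in> G"
      then have "-x + g \<in> F" using G(2) unfolding set_prod_def by blast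
      moreover have "g = x + (-x + g)" by (simp add: add.assoc[symmetric])
      ultimately show "g \<in> (\<lambda>y. x + y) ` F" by blast
    qed
    then show "(\<lambda>y. x + y) ` F \<in> \<xi>" using G(1) assms(3) unfolding is_filter_def by blast
  qed
  ultimately show "round_filter \<xi> \<and> invariant_filter \<xi>" by blast
next
  assume "round_filter \<xi> \<and> invariant_filter \<xi>"
  then have R: "round_filter \<xi>" and I: "invariant_filter \<xi>" by auto
  show "coarse_filter \<xi>"
    unfolding coarse_filter_def
  proof (intro ballI allI impI)
    fix F K assume F: "F \<in> \<xi>" and K: "compact (K::'a set)"
    obtain V G where VG: "nbhd_of_identity V" "G \<in> \<xi>" "set_prod V G \<subseteq> F"
      using R F unfolding round_filter_def by blast
    obtain U where U: "open U" "0 \<in> U" "U \<subseteq> V" using VG(1) unfolding nbhd_of_identity_def by blast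
    have cov: "K \<subseteq> (\<Union>k\<in>K. (\<lambda>x. x + k) ` U)"
    proof
      fix k assume "k \<in> K"
      then show "k \<in> (\<Union>k\<in>K. (\<lambda>x. x + k) ` U)" using U(2) by force
    qed
    obtain D where D: "D \<subseteq> K" "finite D" "K \<subseteq> (\<Union>k\<in>D. (\<lambda>x. x + k) ` U)"
      using compactE_image[OF K, of K "\<lambda>k. (\<lambda>x. x + k) ` U"] cov open_right_translate[OF U(1)]
      by blast
    define G' where "G' = G \<inter> \<Inter>((\<lambda>k. (\<lambda>y. -k + y) ` G) ` D)"
    have "G' \<in> \<xi>" unfolding G'_def
      by (rule filter_inter_fin[OF assms(3) D(2) VG(2)])
        (use I VG(2) in \<open>unfold invariant_filter_def, blast\<close>)
    moreover have "set_prod K G' \<subseteq> F"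
    proof
      fix z assume "z \<in> set_prod K G'"
      then obtain a g where z: "z = a + g" "a \<in> K" "g \<in> G'" unfolding set_prod_def by blast
      then obtain k u where ku: "k \<in> D" "u \<in> U" "a = u + k" using D(3) by blast
      then have "g \<in> (\<lambda>y. -k + y) ` G" using z(3) unfolding G'_def by blast
      then obtain h where h: "h \<in> G" "g = -k + h" by blast
      have "z = u + h" using z(1) ku(3) h(2) by (simp add: add.assoc[symmetric])
      then have "z \<in> set_prod V G" using h(1) ku(2) U(3) unfolding set_prod_def by blast
      then show "z \<in> F" using VG(3) by blast
    qed
    ultimately show "\<exists>G\<in>\<xi>. set_prod K G \<subseteq> F" by blast
  qed
qed

end
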